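(* For every integer $n\ge0$, the formal power series $\left(\frac{x^2}{1-x}\right)^n\in\mathbb{C}[[x]]$ is symplectic.
   Context: A formal power series $\varphi(x)=\sum_{i\ge0}\gamma_i x^i\in\mathbb{C}[[x]]$ is called symplectic if for every $m\ge1$ one has $\sum_{k=0}^{m-1}(-1)^k\binom{m-1}{k}\gamma_{m+k}=0$. *)

theory Defs
  imports "HOL-Computational_Algebra.Formal_Power_Series"
begin

definition symplectic :: "complex fps \<Rightarrow> bool" where
  "symplectic \<phi> \<longleftrightarrow>
     (\<forall>m::nat. m \<ge> 1 \<longrightarrow>
        (\<Sum>k = 0..m-1. (-1) ^ k * of_nat ((m-1) choose k) * fps_nth \<phi> (m+k)) = 0)"

end

theory Submission
  imports Defs
begin

lemma coeff_Xm1_pow: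
  "fps_nth ((fps_X - 1 :: complex fps)^d) i = (if i \<le> d then (-1)^(d-i) * of_nat (d choose i) else 0)"
proof -
  have "(fps_X - 1 :: complex fps)^d = (fps_X + (-1))^d" by simp
  also have "\<dots> = (\<Sum>k\<le>d. of_nat (d choose k) * fps_X^k * (-1)^(d-k))"
    by (rule binomial_ring)
  also have "\<dots> = (\<Sum>k\<le>d. fps_const (of_nat (d choose k) * (-1)^(d-k)) * fps_X^k)"
  proof (intro sum.cong refl)
    fix k
    have "fps_const (of_nat (d choose k) * (-1::complex)^(d-k)) = of_nat (d choose k) * (-1)^(d-k)"
      by (simp del: fps_const_mult fps_const_power fps_const_neg
           add: fps_const_mult[symmetric] fps_of_nat fps_const_power[symmetric] fps_const_neg[symmetric])
    then show "of_nat (d choose k) * fps_X ^ k * (-1) ^ (d - k) =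
      fps_const (of_nat (d choose k) * (-1::complex)^(d-k)) * fps_X^k" by (simp add: mult_ac)
  qed
  finally have e: "(fps_X - 1 :: complex fps)^d = (\<Sum>k\<le>d. fps_const (of_nat (d choose k) * (-1)^(d-k)) * fps_X^k)" .
  show ?thesis unfolding e
    by (simp add: fps_sum_nth fps_X_power_nth if_distrib sum.delta cong: if_cong)
qed

lemma mult_nth_vanish:
  fixes f g :: "complex fps"
  assumes "\<And>j. j > a \<Longrightarrow> fps_nth f j = 0" "\<And>j. j > b \<Longrightarrow> fps_nth g j = 0" "j > a + b"
  shows "fps_nth (f * g) j = 0"
  unfolding fps_mult_nth
proof (rule sum.neutral, intro ballI)
  fix i assume "i \<in> {0..j}"
  show "fps_nth f i * fps_nth g (j - i) = 0"
  proof (cases "i > a")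
    case True then show ?thesis using assms(1) by simp
  next
    case False then have "j - i > b" using assms(3) by linarith
    then show ?thesis using assms(2) by simp
  qed
qed

lemma key_sum:
  fixes \<phi> :: "complex fps"
  shows "(\<Sum>k = 0..d. (-1) ^ k * of_nat (d choose k) * fps_nth \<phi> (d+1+k))
       = fps_nth ((fps_X - 1)^d * \<phi>) (2*d+1)"
proof -
  have "fps_nth ((fps_X - 1)^d * \<phi>) (2*d+1) =
     (\<Sum>i=0..2*d+1. fps_nth ((fps_X - 1 :: complex fps)^d) i * fps_nth \<phi> (2*d+1 - i))"
    by (simp add: fps_mult_nth)
  also have "\<dots> = (\<Sum>i=0..d. fps_nth ((fps_X - 1 :: complex fps)^d) i * fps_nth \<phi> (2*d+1 - i))"
    by (rule sum.mono_neutral_right) (auto simp: coeff_Xm1_pow)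
  also have "\<dots> = (\<Sum>i=0..d. (-1)^(d-i) * of_nat (d choose i) * fps_nth \<phi> (2*d+1 - i))"
    by (rule sum.cong) (auto simp: coeff_Xm1_pow)
  also have "\<dots> = (\<Sum>k=0..d. (-1)^k * of_nat (d choose k) * fps_nth \<phi> (d+1+k))"
    apply (rule sum.reindex_bij_witness[of _ "\<lambda>k. d - k" "\<lambda>i. d - i"])
        apply auto[4]
    subgoal for k
      by (subst binomial_symmetric[of k d]) (auto simp: Suc_diff_le mult_2)
    done
  finally show ?thesis by simp
qed

theorem lemma2p1:
  fixes n :: nat
  shows "symplectic ((fps_X ^ 2 / (1 - fps_X)) ^ n)"
  unfolding symplectic_def
proof (intro allI impI)
  fix m :: nat assume m: "m \<ge> 1"
  define d where "d = m - 1"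
  have md: "m = d + 1" using m d_def by simp
  define I where "I = inverse (1 - fps_X :: complex fps)"
  have I1: "(1 - fps_X) * I = 1" unfolding I_def by (rule inverse_mult_eq_1') simp
  have phi: "(fps_X ^ 2 / (1 - fps_X)) ^ n = fps_X^(2*n) * I^n"
    by (simp add: fps_divide_unit I_def power_mult_distrib power_mult)
  have "(\<Sum>k = 0..m-1. (-1) ^ k * of_nat ((m-1) choose k) * fps_nth ((fps_X ^ 2 / (1 - fps_X)) ^ n) (m+k))
      = fps_nth ((fps_X - 1)^d * (fps_X^(2*n) * I^n)) (2*d+1)"
    using key_sum[of d "fps_X^(2*n) * I^n"] by (simp add: md phi add.commute add.left_commute)
  also have "\<dots> = 0"
  proof (cases "n \<le> d")
    case True
    have "(fps_X - 1 :: complex fps)^d * (fps_X^(2*n) * I^n)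
        = fps_X^(2*n) * ((fps_X - 1)^(d-n) * ((fps_X - 1) * I)^n)"
      using True by (simp add: power_mult_distrib power_add[symmetric] mult_ac
          flip: power_add[of _ "d-n" n])
    also have "(fps_X - 1) * I = - 1" using I1 by (simp add: algebra_simps)
    finally have e: "(fps_X - 1 :: complex fps)^d * (fps_X^(2*n) * I^n)
        = fps_X^(2*n) * ((fps_X - 1)^(d-n) * (-1)^n)" .
    have v1: "\<And>j. j > d - n \<Longrightarrow> fps_nth ((fps_X - 1 :: complex fps)^(d-n) * (-1)^n) j = 0"
    proof -
      fix j assume "j > d - n"
      have "((fps_X - 1 :: complex fps)^(d-n) * (-1)^n) = fps_const ((-1)^n) * (fps_X - 1)^(d-n)"
        by (simp add: mult.commute fps_const_power[symmetric] fps_const_neg[symmetric])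
      then show "fps_nth ((fps_X - 1 :: complex fps)^(d-n) * (-1)^n) j = 0"
        using \<open>j > d - n\<close> by (simp add: coeff_Xm1_pow)
    qed
    show ?thesis unfolding e
      by (rule mult_nth_vanish[where a="2*n" and b="d-n"])
         (use v1 True in \<open>auto simp: fps_X_power_nth\<close>)
  next
    case False
    show ?thesis
      using False by (simp add: mult.left_commute[of _ "fps_X^(2*n)"] fps_X_power_mult_nth)
  qed
  finally show "(\<Sum>k = 0..m-1. (-1) ^ k * of_nat ((m-1) choose k) * fps_nth ((fps_X ^ 2 / (1 - fps_X)) ^ n) (m+k)) = (0::complex)" .
qed

end
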